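(* Let $P=\langle \mathit{Init}(X),\mathit{Tr}(X,X'),\mathit{Bad}(X)\rangle$ be a safety problem over $\mathcal{T}$, let $Q_i$ be a frame, and let $\langle m,\xi,i+1\rangle$ be a proof obligation. Suppose $M$ is a model with $M\models \mathit{qi}(Q_i)\wedge \mathit{Tr}\wedge m'_{\mathit{sk}}$. Let $(\varphi,U)=\textsc{pMbp}(X'\cup\mathit{SK},\ \mathit{Tr}\wedge m'_{\mathit{sk}},\ M)$ and $(\psi,\sigma)=\mathit{abs}(U,\varphi)$ (so that $\langle \psi,\sigma,i\rangle$ is the proof obligation produced by the Predecessor rule). Then $$(\exists\psi)\ \Rightarrow\ \exists X'\cdot\big(\mathit{Tr}\wedge \exists m'\big).$$
   Context: $\mathcal{T}$ is the combined first-order theory of linear integer arithmetic and arrays, with sorts $\mathsf{int}$ and $\mathsf{array}$ (array indices and values have sort $\mathsf{int}$; $\mathsf{sel}$, $\mathit{store}$ are array read/write). Formulas may contain uninterpreted constants; among them are Skolem constants $\mathit{SK}=\{sk_i: i\in\mathbb{N}\}$ of sort $\mathsf{int}$. Variables of sort $\mathsf{int}$ are named $v_i$ ($i\in\mathbb N$). A substitution is a partial sort-respecting map from variables to terms; $\varphi\sigma$ is its application. The Skolem substitution $\mathit{sk}$ maps $v_i\mapsto sk_i$, and $L_{\mathit{sk}}$ denotes $L\,\mathit{sk}$. $\mathit{Const}(\varphi)$, $\mathit{FVars}(\varphi)$ denote the uninterpreted constants and free variables of $\varphi$; $\forall\varphi$ / $\exists\varphi$ denote universal / existential closure over all free variables;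 $\varphi\Rightarrow\psi$ means $\varphi\to\psi$ is valid in $\mathcal{T}$; for a set $Y$ of constants, $\exists Y\cdot\varphi$ existentially quantifies the constants of $Y$ (treating them as variables). For a set $U$ of constants and a formula $\varphi$, $\mathit{abs}(U,\varphi)=(\psi,\sigma)$ is an abstraction: $\psi$ is obtained from $\varphi$ by replacing each constant of $U$ by a variable not free in $\varphi$, where each $sk_i\in U$ is replaced by $v_i$; $\sigma$ has $\mathit{dom}(\sigma)=\mathit{FVars}(\psi)\setminus\mathit{FVars}(\varphi)$ and maps these variables back, so $\psi\sigma=\varphi$ and no constant of $U$ occurs in $\psi$. For ground $\varphi$, $\exists U\cdot\varphi$ also denotes $\exists\psi$ with $(\psi,\_)=\mathit{abs}(U,\varphi)$. A partial model-based projection $\textsc{pMbp}$ takes a ground formula $\varphi$, a model $M\models\varphi$ and $U\subseteq\mathit{Const}(\varphi)$ and returns $(\psi,W)$ such that: $\psi$ is a conjunction of ground literals; $W\subseteq U$ and $\mathit{Const}(\psi)\subseteq\mathit{Const}(\varphi)\setminus(U\setminus W)$; $\psi\Rightarrow\exists (U\setminus W)\cdot\varphi$; $M\models\psi$; for fixed $U,\varphi$ the set $\{\textsc{pMbp}(U,\varphi,M)\mid M\models\varphi\}$ is finite; and $W$ contains no constant of sort $\mathsf{array}$. A safety problem $\langle \mathit{Init}(X),\mathit{Tr}(X,X'),\mathit{Bad}(X)\rangle$ consists of a finite set $X$ of uninterpreted constants disjoint from $\mathit{SK}$, its primed copy $X'=\{a'\mid a\in X\}$, and quantifier-free ground formulas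 $\mathit{Init},\mathit{Bad}$ over $X$ and $\mathit{Tr}$ over $X\cup X'$. For a formula $\varphi$ over $X$ (possibly with free variables), $\varphi'$ is obtained by replacing each $a\in X$ by $a'$. A frame $Q$ is a finite set of pairs $(\ell,\sigma)$ where $\ell$ is a quantifier-free formula over $X$ whose free variables have sort $\mathsf{int}$ and $\sigma$ is a substitution with $\mathit{FVars}(\ell)\subseteq\mathit{dom}(\sigma)$ and range in $X'\cup\mathit{SK}$; $\mathit{qi}(Q)$ is the conjunction of all $\ell\sigma$ for $(\ell,\sigma)\in Q$. A proof obligation $\langle m,\xi,j\rangle$ consists of a conjunction $m$ of literals over $X$ whose free variables have sort $\mathsf{int}$, a substitution $\xi$ with $m\xi$ ground, and $j\in\mathbb N$. *)

theory Defs
  imports Main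
begin

datatype srt = SInt | SArr

text \<open>Uninterpreted constants: Skolem constants sk_i (sort int), named base constants
  with a sort, and primed copies a' of constants.\<close>
datatype const = Sk nat | Cn string srt | Pr const

fun srt_of :: "const \<Rightarrow> srt" where
  "srt_of (Sk i) = SInt"
| "srt_of (Cn s t) = t"
| "srt_of (Pr c) = srt_of c"

fun is_Cn :: "const \<Rightarrow> bool" where
  "is_Cn (Cn s t) = True"
| "is_Cn _ = False"

datatype itrm = IVar nat | ICst const | INum int | IAdd itrm itrm | INeg itrm
  | IMul int itrm | Sel atrm itrm
and atrm = ACst const | Store atrm itrm itrm

datatype fm = FTrue | FFalse | ILe itrm itrm | IEq itrm itrm | IDvd int itrm
  | AEq atrm atrm | Neg fm | Conj fm fm | Disj fm fm

section \<open>Semantics (T-models: standard integers, arrays as total functions int => int)\<close>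

type_synonym interp = "(const \<Rightarrow> int) \<times> (const \<Rightarrow> int \<Rightarrow> int)"
type_synonym valuation = "nat \<Rightarrow> int"

primrec evi :: "interp \<Rightarrow> valuation \<Rightarrow> itrm \<Rightarrow> int"
  and eva :: "interp \<Rightarrow> valuation \<Rightarrow> atrm \<Rightarrow> (int \<Rightarrow> int)" where
  "evi M v (IVar n) = v n"
| "evi M v (ICst c) = fst M c"
| "evi M v (INum k) = k"
| "evi M v (IAdd s t) = evi M v s + evi M v t"
| "evi M v (INeg s) = - evi M v s"
| "evi M v (IMul k s) = k * evi M v s"
| "evi M v (Sel a s) = eva M v a (evi M v s)"
| "eva M v (ACst c) = snd M c"
| "eva M v (Store a s t) = (\<lambda>j. if j = evi M v s then evi M v t else eva M v a j)"

primrec fsem :: "interp \<Rightarrow> valuation \<Rightarrow> fm \<Rightarrow> bool" where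
  "fsem M v FTrue = True"
| "fsem M v FFalse = False"
| "fsem M v (ILe s t) = (evi M v s \<le> evi M v t)"
| "fsem M v (IEq s t) = (evi M v s = evi M v t)"
| "fsem M v (IDvd k s) = (k dvd evi M v s)"
| "fsem M v (AEq a b) = (eva M v a = eva M v b)"
| "fsem M v (Neg f) = (\<not> fsem M v f)"
| "fsem M v (Conj f g) = (fsem M v f \<and> fsem M v g)"
| "fsem M v (Disj f g) = (fsem M v f \<or> fsem M v g)"

text \<open>M |= phi (for ground phi the valuation is irrelevant).\<close>
definition models :: "interp \<Rightarrow> fm \<Rightarrow> bool" where
  "models M f \<longleftrightarrow> (\<forall>v. fsem M v f)"

type_synonym sem = "interp \<Rightarrow> valuation \<Rightarrow> bool"

definition sem :: "fm \<Rightarrow> sem" where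
  "sem f = (\<lambda>M v. fsem M v f)"

definition valid_imp :: "sem \<Rightarrow> sem \<Rightarrow> bool" where
  "valid_imp P Q \<longleftrightarrow> (\<forall>M v. P M v \<longrightarrow> Q M v)"

definition agree_off :: "const set \<Rightarrow> interp \<Rightarrow> interp \<Rightarrow> bool" where
  "agree_off Y M M' \<longleftrightarrow> (\<forall>c. c \<notin> Y \<longrightarrow> fst M c = fst M' c \<and> snd M c = snd M' c)"

definition ex_consts :: "const set \<Rightarrow> sem \<Rightarrow> sem" where
  "ex_consts Y P = (\<lambda>M v. \<exists>M'. agree_off Y M M' \<and> P M' v)"

definition ex_close :: "fm \<Rightarrow> sem" where
  "ex_close f = (\<lambda>M v. \<exists>v'. fsem M v' f)"

primrec cs_i :: "itrm \<Rightarrow> const set" and cs_a :: "atrm \<Rightarrow> const set" where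
  "cs_i (IVar n) = {}"
| "cs_i (ICst c) = {c}"
| "cs_i (INum k) = {}"
| "cs_i (IAdd s t) = cs_i s \<union> cs_i t"
| "cs_i (INeg s) = cs_i s"
| "cs_i (IMul k s) = cs_i s"
| "cs_i (Sel a s) = cs_a a \<union> cs_i s"
| "cs_a (ACst c) = {c}"
| "cs_a (Store a s t) = cs_a a \<union> cs_i s \<union> cs_i t"

primrec fconsts :: "fm \<Rightarrow> const set" where
  "fconsts FTrue = {}"
| "fconsts FFalse = {}"
| "fconsts (ILe s t) = cs_i s \<union> cs_i t"
| "fconsts (IEq s t) = cs_i s \<union> cs_i t"
| "fconsts (IDvd k s) = cs_i s"
| "fconsts (AEq a b) = cs_a a \<union> cs_a b"
| "fconsts (Neg f) = fconsts f"
| "fconsts (Conj f g) = fconsts f \<union> fconsts g"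
| "fconsts (Disj f g) = fconsts f \<union> fconsts g"

primrec fv_i :: "itrm \<Rightarrow> nat set" and fv_a :: "atrm \<Rightarrow> nat set" where
  "fv_i (IVar n) = {n}"
| "fv_i (ICst c) = {}"
| "fv_i (INum k) = {}"
| "fv_i (IAdd s t) = fv_i s \<union> fv_i t"
| "fv_i (INeg s) = fv_i s"
| "fv_i (IMul k s) = fv_i s"
| "fv_i (Sel a s) = fv_a a \<union> fv_i s"
| "fv_a (ACst c) = {}"
| "fv_a (Store a s t) = fv_a a \<union> fv_i s \<union> fv_i t"

primrec fvars :: "fm \<Rightarrow> nat set" where
  "fvars FTrue = {}"
| "fvars FFalse = {}"
| "fvars (ILe s t) = fv_i s \<union> fv_i t"
| "fvars (IEq s t) = fv_i s \<union> fv_i t"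
| "fvars (IDvd k s) = fv_i s"
| "fvars (AEq a b) = fv_a a \<union> fv_a b"
| "fvars (Neg f) = fvars f"
| "fvars (Conj f g) = fvars f \<union> fvars g"
| "fvars (Disj f g) = fvars f \<union> fvars g"

definition ground :: "fm \<Rightarrow> bool" where
  "ground f \<longleftrightarrow> fvars f = {}"

primrec wf_i :: "itrm \<Rightarrow> bool" and wf_a :: "atrm \<Rightarrow> bool" where
  "wf_i (IVar n) = True"
| "wf_i (ICst c) = (srt_of c = SInt)"
| "wf_i (INum k) = True"
| "wf_i (IAdd s t) = (wf_i s \<and> wf_i t)"
| "wf_i (INeg s) = wf_i s"
| "wf_i (IMul k s) = wf_i s"
| "wf_i (Sel a s) = (wf_a a \<and> wf_i s)"
| "wf_a (ACst c) = (srt_of c = SArr)"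
| "wf_a (Store a s t) = (wf_a a \<and> wf_i s \<and> wf_i t)"

primrec wf :: "fm \<Rightarrow> bool" where
  "wf FTrue = True"
| "wf FFalse = True"
| "wf (ILe s t) = (wf_i s \<and> wf_i t)"
| "wf (IEq s t) = (wf_i s \<and> wf_i t)"
| "wf (IDvd k s) = wf_i s"
| "wf (AEq a b) = (wf_a a \<and> wf_a b)"
| "wf (Neg f) = wf f"
| "wf (Conj f g) = (wf f \<and> wf g)"
| "wf (Disj f g) = (wf f \<and> wf g)"

fun is_atom :: "fm \<Rightarrow> bool" where
  "is_atom (ILe s t) = True"
| "is_atom (IEq s t) = True"
| "is_atom (IDvd k s) = True"
| "is_atom (AEq a b) = True"
| "is_atom FTrue = True"
| "is_atom FFalse = True"
| "is_atom _ = False"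

fun is_literal :: "fm \<Rightarrow> bool" where
  "is_literal (Neg f) = is_atom f"
| "is_literal f = is_atom f"

text \<open>Conjunction of literals (FTrue is the empty conjunction).\<close>
fun conj_lits :: "fm \<Rightarrow> bool" where
  "conj_lits (Conj f g) = (conj_lits f \<and> conj_lits g)"
| "conj_lits f = is_literal f"

type_synonym subst = "nat \<rightharpoonup> itrm"

primrec subst_i :: "subst \<Rightarrow> itrm \<Rightarrow> itrm" and subst_a :: "subst \<Rightarrow> atrm \<Rightarrow> atrm" where
  "subst_i \<sigma> (IVar n) = (case \<sigma> n of None \<Rightarrow> IVar n | Some t \<Rightarrow> t)"
| "subst_i \<sigma> (ICst c) = ICst c"
| "subst_i \<sigma> (INum k) = INum k"
| "subst_i \<sigma> (IAdd s t) = IAdd (subst_i \<sigma> s) (subst_i \<sigma> t)"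
| "subst_i \<sigma> (INeg s) = INeg (subst_i \<sigma> s)"
| "subst_i \<sigma> (IMul k s) = IMul k (subst_i \<sigma> s)"
| "subst_i \<sigma> (Sel a s) = Sel (subst_a \<sigma> a) (subst_i \<sigma> s)"
| "subst_a \<sigma> (ACst c) = ACst c"
| "subst_a \<sigma> (Store a s t) = Store (subst_a \<sigma> a) (subst_i \<sigma> s) (subst_i \<sigma> t)"

primrec subst :: "subst \<Rightarrow> fm \<Rightarrow> fm" where
  "subst \<sigma> FTrue = FTrue"
| "subst \<sigma> FFalse = FFalse"
| "subst \<sigma> (ILe s t) = ILe (subst_i \<sigma> s) (subst_i \<sigma> t)"
| "subst \<sigma> (IEq s t) = IEq (subst_i \<sigma> s) (subst_i \<sigma> t)"
| "subst \<sigma> (IDvd k s) = IDvd k (subst_i \<sigma> s)"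
| "subst \<sigma> (AEq a b) = AEq (subst_a \<sigma> a) (subst_a \<sigma> b)"
| "subst \<sigma> (Neg f) = Neg (subst \<sigma> f)"
| "subst \<sigma> (Conj f g) = Conj (subst \<sigma> f) (subst \<sigma> g)"
| "subst \<sigma> (Disj f g) = Disj (subst \<sigma> f) (subst \<sigma> g)"

definition sk :: subst where
  "sk = (\<lambda>i. Some (ICst (Sk i)))"

primrec cmap_i :: "(const \<Rightarrow> const) \<Rightarrow> itrm \<Rightarrow> itrm"
  and cmap_a :: "(const \<Rightarrow> const) \<Rightarrow> atrm \<Rightarrow> atrm" where
  "cmap_i r (IVar n) = IVar n"
| "cmap_i r (ICst c) = ICst (r c)"
| "cmap_i r (INum k) = INum k"
| "cmap_i r (IAdd s t) = IAdd (cmap_i r s) (cmap_i r t)"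
| "cmap_i r (INeg s) = INeg (cmap_i r s)"
| "cmap_i r (IMul k s) = IMul k (cmap_i r s)"
| "cmap_i r (Sel a s) = Sel (cmap_a r a) (cmap_i r s)"
| "cmap_a r (ACst c) = ACst (r c)"
| "cmap_a r (Store a s t) = Store (cmap_a r a) (cmap_i r s) (cmap_i r t)"

primrec cmap :: "(const \<Rightarrow> const) \<Rightarrow> fm \<Rightarrow> fm" where
  "cmap r FTrue = FTrue"
| "cmap r FFalse = FFalse"
| "cmap r (ILe s t) = ILe (cmap_i r s) (cmap_i r t)"
| "cmap r (IEq s t) = IEq (cmap_i r s) (cmap_i r t)"
| "cmap r (IDvd k s) = IDvd k (cmap_i r s)"
| "cmap r (AEq a b) = AEq (cmap_a r a) (cmap_a r b)"
| "cmap r (Neg f) = Neg (cmap r f)"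
| "cmap r (Conj f g) = Conj (cmap r f) (cmap r g)"
| "cmap r (Disj f g) = Disj (cmap r f) (cmap r g)"

definition prime :: "const set \<Rightarrow> fm \<Rightarrow> fm" where
  "prime X f = cmap (\<lambda>c. if c \<in> X then Pr c else c) f"

primrec abst_i :: "const set \<Rightarrow> (const \<Rightarrow> nat) \<Rightarrow> itrm \<Rightarrow> itrm"
  and abst_a :: "const set \<Rightarrow> (const \<Rightarrow> nat) \<Rightarrow> atrm \<Rightarrow> atrm" where
  "abst_i U r (IVar n) = IVar n"
| "abst_i U r (ICst c) = (if c \<in> U then IVar (r c) else ICst c)"
| "abst_i U r (INum k) = INum k"
| "abst_i U r (IAdd s t) = IAdd (abst_i U r s) (abst_i U r t)"
| "abst_i U r (INeg s) = INeg (abst_i U r s)"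
| "abst_i U r (IMul k s) = IMul k (abst_i U r s)"
| "abst_i U r (Sel a s) = Sel (abst_a U r a) (abst_i U r s)"
| "abst_a U r (ACst c) = ACst c"
| "abst_a U r (Store a s t) = Store (abst_a U r a) (abst_i U r s) (abst_i U r t)"

primrec abst :: "const set \<Rightarrow> (const \<Rightarrow> nat) \<Rightarrow> fm \<Rightarrow> fm" where
  "abst U r FTrue = FTrue"
| "abst U r FFalse = FFalse"
| "abst U r (ILe s t) = ILe (abst_i U r s) (abst_i U r t)"
| "abst U r (IEq s t) = IEq (abst_i U r s) (abst_i U r t)"
| "abst U r (IDvd k s) = IDvd k (abst_i U r s)"
| "abst U r (AEq a b) = AEq (abst_a U r a) (abst_a U r b)"
| "abst U r (Neg f) = Neg (abst U r f)"
| "abst U r (Conj f g) = Conj (abst U r f) (abst U r g)"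
| "abst U r (Disj f g) = Disj (abst U r f) (abst U r g)"

definition is_abs :: "const set \<Rightarrow> fm \<Rightarrow> fm \<Rightarrow> subst \<Rightarrow> bool" where
  "is_abs U \<phi> \<psi> \<sigma> \<longleftrightarrow>
     (\<exists>r. inj_on r U \<and> (\<forall>c\<in>U. r c \<notin> fvars \<phi>) \<and> (\<forall>i. Sk i \<in> U \<longrightarrow> r (Sk i) = i)
        \<and> \<psi> = abst U r \<phi>)
     \<and> dom \<sigma> = fvars \<psi> - fvars \<phi> \<and> subst \<sigma> \<psi> = \<phi> \<and> fconsts \<psi> \<inter> U = {}"

definition is_pMbp :: "(const set \<Rightarrow> fm \<Rightarrow> interp \<Rightarrow> fm \<times> const set) \<Rightarrow> bool" where
  "is_pMbp pmbp \<longleftrightarrow>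
    (\<forall>U \<phi> M. ground \<phi> \<and> wf \<phi> \<and> models M \<phi> \<longrightarrow>
       (case pmbp U \<phi> M of (\<psi>, W) \<Rightarrow>
          conj_lits \<psi> \<and> ground \<psi> \<and> wf \<psi> \<and> W \<subseteq> U
          \<and> fconsts \<psi> \<subseteq> fconsts \<phi> - (U - W)
          \<and> valid_imp (sem \<psi>) (ex_consts (U - W) (sem \<phi>))
          \<and> models M \<psi>
          \<and> (\<forall>c\<in>W. srt_of c \<noteq> SArr)))
    \<and> (\<forall>U \<phi>. ground \<phi> \<and> wf \<phi> \<longrightarrow> finite {pmbp U \<phi> M | M. models M \<phi>})"

definition SK :: "const set" where
  "SK = range Sk"

definition safety_problem :: "const set \<Rightarrow> fm \<Rightarrow> fm \<Rightarrow> fm \<Rightarrow> bool" where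
  "safety_problem X Init Tr Bad \<longleftrightarrow>
     finite X \<and> (\<forall>a\<in>X. is_Cn a)
     \<and> ground Init \<and> wf Init \<and> fconsts Init \<subseteq> X
     \<and> ground Tr \<and> wf Tr \<and> fconsts Tr \<subseteq> X \<union> Pr ` X
     \<and> ground Bad \<and> wf Bad \<and> fconsts Bad \<subseteq> X"

definition is_frame :: "const set \<Rightarrow> (fm \<times> subst) set \<Rightarrow> bool" where
  "is_frame X Q \<longleftrightarrow> finite Q \<and>
     (\<forall>(l, \<sigma>) \<in> Q. wf l \<and> fconsts l \<subseteq> X \<and> fvars l \<subseteq> dom \<sigma>
        \<and> (\<forall>t \<in> ran \<sigma>. \<exists>c \<in> Pr ` X \<union> SK. srt_of c = SInt \<and> t = ICst c))"

definition models_qi :: "interp \<Rightarrow> (fm \<times> subst) set \<Rightarrow> bool" where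
  "models_qi M Q \<longleftrightarrow> (\<forall>(l, \<sigma>) \<in> Q. models M (subst \<sigma> l))"

definition proof_obligation :: "const set \<Rightarrow> fm \<Rightarrow> subst \<Rightarrow> bool" where
  "proof_obligation X m \<xi> \<longleftrightarrow> conj_lits m \<and> wf m \<and> fconsts m \<subseteq> X
     \<and> (\<forall>t \<in> ran \<xi>. wf_i t) \<and> ground (subst \<xi> m)"

end

theory Submission
  imports Defs
begin

lemma agree_ev:
  "(\<forall>c\<in>cs_i t. fst M c = fst M' c \<and> snd M c = snd M' c) \<Longrightarrow> evi M v t = evi M' v t"
  "(\<forall>c\<in>cs_a a. fst M c = fst M' c \<and> snd M c = snd M' c) \<Longrightarrow> eva M v a = eva M' v a"
  by (induct t and a) auto

lemma agree_fsem:
  "(\<forall>c\<in>fconsts f. fst M c = fst M' c \<and> snd M c = snd M' c) \<Longrightarrow> fsem M v f = fsem M' v f"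
proof (induct f)
  case (ILe s t) then show ?case using agree_ev(1)[of s M M' v] agree_ev(1)[of t M M' v] by auto
next
  case (IEq s t) then show ?case using agree_ev(1)[of s M M' v] agree_ev(1)[of t M M' v] by auto
next
  case (IDvd k s) then show ?case using agree_ev(1)[of s M M' v] by auto
next
  case (AEq s t) then show ?case using agree_ev(2)[of s M M' v] agree_ev(2)[of t M M' v] by auto
qed auto

lemma sk_ev:
  "evi M v (subst_i sk t) = evi M (\<lambda>i. fst M (Sk i)) t"
  "eva M v (subst_a sk a) = eva M (\<lambda>i. fst M (Sk i)) a"
  by (induct t and a) (auto simp: sk_def)

lemma sk_fsem: "fsem M v (subst sk f) = fsem M (\<lambda>i. fst M (Sk i)) f"
  by (induct f) (auto simp: sk_ev)

lemma cmap_sk: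
  "\<forall>i. r (Sk i) = Sk i \<Longrightarrow> cmap_i r (subst_i sk t) = subst_i sk (cmap_i r t)"
  "\<forall>i. r (Sk i) = Sk i \<Longrightarrow> cmap_a r (subst_a sk a) = subst_a sk (cmap_a r a)"
  by (induct t and a) (auto simp: sk_def)

lemma cmap_sk_fm: "\<forall>i. r (Sk i) = Sk i \<Longrightarrow> cmap r (subst sk f) = subst sk (cmap r f)"
  by (induct f) (auto simp: cmap_sk)

lemma cmap_cs:
  "cs_i (cmap_i r t) = r ` cs_i t" "cs_a (cmap_a r a) = r ` cs_a a"
  by (induct t and a) auto

lemma cmap_fconsts: "fconsts (cmap r f) = r ` fconsts f"
  by (induct f) (auto simp: cmap_cs image_Un)

lemma cmap_fv:
  "fv_i (cmap_i r t) = fv_i t" "fv_a (cmap_a r a) = fv_a a"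
  by (induct t and a) auto

lemma cmap_fvars: "fvars (cmap r f) = fvars f"
  by (induct f) (auto simp: cmap_fv)

lemma sk_fv:
  "fv_i (subst_i sk t) = {}" "fv_a (subst_a sk a) = {}"
  by (induct t and a) (auto simp: sk_def)

lemma sk_fvars: "fvars (subst sk f) = {}"
  by (induct f) (auto simp: sk_fv)

lemma cmap_wf:
  "\<forall>c. srt_of (r c) = srt_of c \<Longrightarrow> wf_i (cmap_i r t) = wf_i t"
  "\<forall>c. srt_of (r c) = srt_of c \<Longrightarrow> wf_a (cmap_a r a) = wf_a a"
  by (induct t and a) auto

lemma cmap_wf_fm: "\<forall>c. srt_of (r c) = srt_of c \<Longrightarrow> wf (cmap r f) = wf f"
  by (induct f) (auto simp: cmap_wf)

lemma sk_wf:
  "wf_i t \<Longrightarrow> wf_i (subst_i sk t)" "wf_a a \<Longrightarrow> wf_a (subst_a sk a)"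
  by (induct t and a) (auto simp: sk_def)

lemma sk_wf_fm: "wf f \<Longrightarrow> wf (subst sk f)"
  by (induct f) (auto simp: sk_wf)

lemma abst_ev:
  "evi N v (abst_i U r t) = evi (\<lambda>c. if c \<in> U then v (r c) else fst N c, snd N) v t"
  "eva N v (abst_a U r a) = eva (\<lambda>c. if c \<in> U then v (r c) else fst N c, snd N) v a"
  by (induct t and a) auto

lemma abst_fsem:
  "fsem N v (abst U r f) = fsem (\<lambda>c. if c \<in> U then v (r c) else fst N c, snd N) v f"
  by (induct f) (auto simp: abst_ev)

lemma gev:
  "(\<forall>n\<in>fv_i t. v n = v' n) \<Longrightarrow> evi M v t = evi M v' t"
  "(\<forall>n\<in>fv_a a. v n = v' n) \<Longrightarrow> eva M v a = eva M v' a"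
  by (induct t and a) auto

lemma gfsem: "fvars f = {} \<Longrightarrow> fsem M v f = fsem M v' f"
proof (induct f)
  case (ILe s t) then show ?case using gev(1)[of s v v' M] gev(1)[of t v v' M] by auto
next
  case (IEq s t) then show ?case using gev(1)[of s v v' M] gev(1)[of t v v' M] by auto
next
  case (IDvd k s) then show ?case using gev(1)[of s v v' M] by auto
next
  case (AEq s t) then show ?case using gev(2)[of s v v' M] gev(2)[of t v v' M] by auto
qed auto

theorem lemma1:
  fixes X :: "const set" and Init Tr Bad :: fm
    and Q :: "(fm \<times> subst) set" and m :: fm and \<xi> :: subst
    and pmbp :: "const set \<Rightarrow> fm \<Rightarrow> interp \<Rightarrow> fm \<times> const set"
    and M :: interp and \<phi> \<psi> :: fm and U :: "const set" and \<sigma> :: subst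
  assumes "safety_problem X Init Tr Bad"
    and "is_frame X Q"
    and "proof_obligation X m \<xi>"
    and "is_pMbp pmbp"
    and "models_qi M Q"
    and "models M (Conj Tr (prime X (subst sk m)))"
    and "pmbp (Pr ` X \<union> SK) (Conj Tr (prime X (subst sk m))) M = (\<phi>, U)"
    and "is_abs U \<phi> \<psi> \<sigma>"
  shows "valid_imp (ex_close \<psi>)
           (ex_consts (Pr ` X) (\<lambda>M' v. fsem M' v Tr \<and> ex_close (prime X m) M' v))"
proof -
  define \<rho> where "\<rho> = (\<lambda>c. if c \<in> X then Pr c else c)"
  define \<phi>0 where "\<phi>0 = Conj Tr (prime X (subst sk m))"
  define U' where "U' = Pr ` X \<union> SK"
  have sp: "finite X" "\<forall>a\<in>X. is_Cn a" "ground Tr" "wf Tr" "fconsts Tr \<subseteq> X \<union> Pr ` X"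
    using assms(1) unfolding safety_problem_def by auto
  have po: "wf m" "fconsts m \<subseteq> X" using assms(3) unfolding proof_obligation_def by auto
  have skX: "\<And>i. Sk i \<notin> X" using sp(2) by force
  have XU': "\<And>c. c \<in> X \<Longrightarrow> c \<notin> U'" using sp(2) unfolding U'_def SK_def by force
  have srt: "\<forall>c. srt_of (\<rho> c) = srt_of c" unfolding \<rho>_def by auto
  have gr: "ground \<phi>0" using sp(3) unfolding \<phi>0_def ground_def prime_def
    by (simp add: cmap_fvars sk_fvars)
  have wf0: "wf \<phi>0" using sp(4) po(1) unfolding \<phi>0_def prime_def
    by (simp add: cmap_wf_fm[OF srt[unfolded \<rho>_def]] sk_wf_fm)
  have mod0: "models M \<phi>0" using assms(6) unfolding \<phi>0_def .
  have P: "conj_lits \<phi> \<and> ground \<phi> \<and> wf \<phi> \<and> U \<subseteq> U'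
          \<and> fconsts \<phi> \<subseteq> fconsts \<phi>0 - (U' - U)
          \<and> valid_imp (sem \<phi>) (ex_consts (U' - U) (sem \<phi>0))
          \<and> models M \<phi> \<and> (\<forall>c\<in>U. srt_of c \<noteq> SArr)"
    using assms(4) gr wf0 mod0 assms(7) unfolding is_pMbp_def \<phi>0_def U'_def
    by (metis (mono_tags, lifting) case_prod_conv)
  obtain r where r: "\<psi> = abst U r \<phi>" using assms(8) unfolding is_abs_def by blast
  show ?thesis unfolding valid_imp_def
  proof (intro allI impI)
    fix N v
    assume "ex_close \<psi> N v"
    then obtain v' where v': "fsem N v' \<psi>" unfolding ex_close_def by blast
    define N1 where "N1 = ((\<lambda>c. if c \<in> U then v' (r c) else fst N c), snd N)"
    have "fsem N1 v' \<phi>" using v' r abst_fsem unfolding N1_def by simp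
    then have "ex_consts (U' - U) (sem \<phi>0) N1 v'" using P unfolding valid_imp_def sem_def by blast
    then obtain N2 where ag: "agree_off (U' - U) N1 N2" and f2: "fsem N2 v' \<phi>0"
      unfolding ex_consts_def sem_def by blast
    have agN: "\<And>c. c \<notin> U' \<Longrightarrow> fst N c = fst N2 c \<and> snd N c = snd N2 c"
    proof -
      fix c assume c: "c \<notin> U'"
      then have "c \<notin> U" using P by blast
      then show "fst N c = fst N2 c \<and> snd N c = snd N2 c"
        using ag c unfolding agree_off_def N1_def by auto
    qed
    define N' where "N' = ((\<lambda>c. if c \<in> Pr ` X then fst N2 c else fst N c),
                           (\<lambda>c. if c \<in> Pr ` X then snd N2 c else snd N c))"
    have a1: "agree_off (Pr ` X) N N'" unfolding agree_off_def N'_def by auto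
    have "\<forall>c\<in>fconsts Tr. fst N' c = fst N2 c \<and> snd N' c = snd N2 c"
      using sp(5) agN XU' unfolding N'_def by auto
    then have t0: "fsem N' v' Tr" using f2 agree_fsem[of Tr N' N2 v'] unfolding \<phi>0_def by auto
    have t: "fsem N' v Tr" using t0 gfsem[of Tr N' v' v] sp(3) unfolding ground_def by auto
    have "fsem N2 v' (subst sk (prime X m))"
      using f2 skX unfolding \<phi>0_def prime_def by (simp add: cmap_sk_fm)
    then have "fsem N2 (\<lambda>i. fst N2 (Sk i)) (prime X m)" by (simp add: sk_fsem)
    moreover have "fconsts (prime X m) \<subseteq> Pr ` X" using po(2)
      unfolding prime_def cmap_fconsts by auto
    then have "\<forall>c\<in>fconsts (prime X m). fst N' c = fst N2 c \<and> snd N' c = snd N2 c"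
      unfolding N'_def by auto
    ultimately have "fsem N' (\<lambda>i. fst N2 (Sk i)) (prime X m)"
      using agree_fsem[of "prime X m" N' N2] by auto
    then have "ex_close (prime X m) N' v" unfolding ex_close_def by blast
    then show "ex_consts (Pr ` X) (\<lambda>M' v. fsem M' v Tr \<and> ex_close (prime X m) M' v) N v"
      unfolding ex_consts_def using a1 t
      by (metis ex_close_def \<open>ground Tr\<close>)
  qed
qed

end
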